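(* Let $({\bm X},d_{\bm X})$ be a finite pseudometric space and let $\mathcal{M}({\bm X})$ be the collection of all Markov chains $({\bm X},m^{\bm X}_\bullet,\nu^{\bm X})$ with state space ${\bm X}$. For every $p\in\mathcal{P}(\mathbb{N})$, the map $(\mathcal{X}_1,\mathcal{X}_2)\mapsto d^{p}_{\mathrm{OTM}}(\mathcal{X}_1,\mathcal{X}_2;d_{\bm X})$ is a pseudometric on $\mathcal{M}({\bm X})$. If moreover $d_{\bm X}$ is a metric and $p(t)>0$ for all $t\in\mathbb{N}$, then it is a metric.
   Context: $\mathcal{C}(\alpha,\beta)$ denotes the set of couplings. For Markov chains $\mathcal{X}=({\bm X},m^{\bm X}_\bullet,\nu^{\bm X})$, $\mathcal{Y}=({\bm Y},m^{\bm Y}_\bullet,\nu^{\bm Y})$ on finite sets, a Markovian coupling is a (possibly time-inhomogeneous) Markov chain $(X_t,Y_t)_{t\in\mathbb{N}}$ on ${\bm X}\times{\bm Y}$ with $\mathrm{law}(X_0,Y_0)\in\mathcal{C}(\nu^{\bm X},\nu^{\bm Y})$ and, for all $t,x,y$, the conditional law of $(X_{t+1},Y_{t+1})$ given $(X_t,Y_t)=(x,y)$ in $\mathcal{C}(m^{\bm X}_x,m^{\bm Y}_y)$. For $p\in\mathcal{P}(\mathbb{N})$, $T\sim p$ and cost $C$, $d^{p}_{\mathrm{OTM}}(\mathcal{X},\mathcal{Y};C)=\inf\mathbb{E}\,C(X_T,Y_T)$ over Markovian couplings independent of $T$. *)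

theory Defs
  imports "HOL-Probability.Probability"
begin

type_synonym 'a mchain = "('a \<Rightarrow> 'a pmf) \<times> 'a pmf"

definition kernel :: "'a mchain \<Rightarrow> 'a \<Rightarrow> 'a pmf" where
  "kernel X = fst X"

definition init :: "'a mchain \<Rightarrow> 'a pmf" where
  "init X = snd X"

definition is_coupling :: "('a \<times> 'b) pmf \<Rightarrow> 'a pmf \<Rightarrow> 'b pmf \<Rightarrow> bool" where
  "is_coupling \<mu> \<alpha> \<beta> \<longleftrightarrow> map_pmf fst \<mu> = \<alpha> \<and> map_pmf snd \<mu> = \<beta>"

definition markovian_coupling ::
  "'a mchain \<Rightarrow> 'b mchain \<Rightarrow> ('a \<times> 'b) pmf \<Rightarrow> (nat \<Rightarrow> 'a \<times> 'b \<Rightarrow> ('a \<times> 'b) pmf) \<Rightarrow> bool" where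
  "markovian_coupling X Y \<mu>0 K \<longleftrightarrow>
     is_coupling \<mu>0 (init X) (init Y) \<and>
     (\<forall>t x y. is_coupling (K t (x, y)) (kernel X x) (kernel Y y))"

fun coupled_law :: "('a \<times> 'b) pmf \<Rightarrow> (nat \<Rightarrow> 'a \<times> 'b \<Rightarrow> ('a \<times> 'b) pmf) \<Rightarrow> nat \<Rightarrow> ('a \<times> 'b) pmf" where
  "coupled_law \<mu>0 K 0 = \<mu>0"
| "coupled_law \<mu>0 K (Suc t) = bind_pmf (coupled_law \<mu>0 K t) (K t)"

text \<open>E C(X_T, Y_T) with T ~ p independent of the coupled chain.\<close>
definition coupling_cost ::
  "nat pmf \<Rightarrow> ('a \<times> 'b) pmf \<Rightarrow> (nat \<Rightarrow> 'a \<times> 'b \<Rightarrow> ('a \<times> 'b) pmf) \<Rightarrow> ('a \<Rightarrow> 'b \<Rightarrow> real) \<Rightarrow> real" where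
  "coupling_cost p \<mu>0 K C =
     measure_pmf.expectation p (\<lambda>t. measure_pmf.expectation (coupled_law \<mu>0 K t) (\<lambda>(x, y). C x y))"

definition d_OTM :: "nat pmf \<Rightarrow> 'a mchain \<Rightarrow> 'b mchain \<Rightarrow> ('a \<Rightarrow> 'b \<Rightarrow> real) \<Rightarrow> real" where
  "d_OTM p X Y C =
     (INF (\<mu>0, K) \<in> {(\<mu>0, K). markovian_coupling X Y \<mu>0 K}. coupling_cost p \<mu>0 K C)"

text \<open>Law of the path (X_0, ..., X_n) of a Markov chain (finite-dimensional distributions).\<close>
fun path_law :: "'a mchain \<Rightarrow> nat \<Rightarrow> 'a list pmf" where
  "path_law X 0 = map_pmf (\<lambda>x. [x]) (init X)"
| "path_law X (Suc n) = bind_pmf (path_law X n) (\<lambda>xs. map_pmf (\<lambda>y. xs @ [y]) (kernel X (last xs)))"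

definition is_pseudometric :: "('a \<Rightarrow> 'a \<Rightarrow> real) \<Rightarrow> bool" where
  "is_pseudometric d \<longleftrightarrow>
     (\<forall>x. d x x = 0) \<and> (\<forall>x y. 0 \<le> d x y) \<and> (\<forall>x y. d x y = d y x) \<and>
     (\<forall>x y z. d x z \<le> d x y + d y z)"

definition is_metric :: "('a \<Rightarrow> 'a \<Rightarrow> real) \<Rightarrow> bool" where
  "is_metric d \<longleftrightarrow> is_pseudometric d \<and> (\<forall>x y. d x y = 0 \<longrightarrow> x = y)"

end

theory Submission
  imports Defs
begin



lemma exp_fin: "measure_pmf.expectation (M::('s::finite) pmf) f = (\<Sum>a\<in>UNIV. f a * pmf M a)"
  by (rule integral_measure_pmf_real) auto

lemma exp_bound: fixes f :: "'s::finite \<Rightarrow> real"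
  shows "\<bar>measure_pmf.expectation M f\<bar> \<le> (\<Sum>a\<in>UNIV. \<bar>f a\<bar>)"
proof -
  have "\<bar>\<Sum>a\<in>UNIV. f a * pmf M a\<bar> \<le> (\<Sum>a\<in>UNIV. \<bar>f a * pmf M a\<bar>)" by (rule sum_abs)
  also have "\<dots> \<le> (\<Sum>a\<in>UNIV. \<bar>f a\<bar>)"
    by (rule sum_mono) (simp add: abs_mult mult_left_le pmf_le_1)
  finally show ?thesis by (simp add: exp_fin)
qed

lemma int_p: fixes f :: "'s::finite \<Rightarrow> real"
  shows "integrable (measure_pmf p) (\<lambda>t. measure_pmf.expectation (\<nu> t) f)"
  by (rule measure_pmf.integrable_const_bound[where B="\<Sum>a\<in>UNIV. \<bar>f a\<bar>"])
     (auto simp: exp_bound)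

lemma exp_p_lower: fixes g :: "nat \<Rightarrow> real"
  assumes "integrable (measure_pmf p) g" "\<And>s. 0 \<le> g s"
  shows "pmf p t * g t \<le> measure_pmf.expectation p g"
proof -
  have "measure_pmf.expectation p (\<lambda>s. if s = t then g t else 0) = g t * pmf p t"
    by (subst integral_measure_pmf_real[where A="{t}"]) (auto split: if_splits)
  moreover have "measure_pmf.expectation p (\<lambda>s. if s = t then g t else 0) \<le> measure_pmf.expectation p g"
    by (rule integral_mono) (use assms in \<open>auto intro!: measure_pmf.integrable_const_bound[where B="\<bar>g t\<bar>"]\<close>)
  ultimately show ?thesis by (simp add: mult.commute)
qed



fun mlaw :: "'a mchain \<Rightarrow> nat \<Rightarrow> 'a pmf" where
  "mlaw X 0 = init X"
| "mlaw X (Suc n) = bind_pmf (mlaw X n) (kernel X)"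

lemma coupled_fst:
  assumes "markovian_coupling X Y \<mu>0 K"
  shows "map_pmf fst (coupled_law \<mu>0 K t) = mlaw X t"
proof (induction t)
  case 0 then show ?case using assms by (simp add: markovian_coupling_def is_coupling_def)
next
  case (Suc t)
  have "map_pmf fst (coupled_law \<mu>0 K (Suc t)) = bind_pmf (coupled_law \<mu>0 K t) (\<lambda>x. map_pmf fst (K t x))"
    by (simp add: map_bind_pmf)
  also have "\<dots> = bind_pmf (coupled_law \<mu>0 K t) (\<lambda>x. kernel X (fst x))"
    using assms by (intro bind_pmf_cong) (auto simp: markovian_coupling_def is_coupling_def)
  also have "\<dots> = bind_pmf (map_pmf fst (coupled_law \<mu>0 K t)) (kernel X)"
    by (simp add: bind_map_pmf)
  finally show ?case using Suc by simp
qed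

lemma coupled_snd:
  assumes "markovian_coupling X Y \<mu>0 K"
  shows "map_pmf snd (coupled_law \<mu>0 K t) = mlaw Y t"
proof (induction t)
  case 0 then show ?case using assms by (simp add: markovian_coupling_def is_coupling_def)
next
  case (Suc t)
  have "map_pmf snd (coupled_law \<mu>0 K (Suc t)) = bind_pmf (coupled_law \<mu>0 K t) (\<lambda>x. map_pmf snd (K t x))"
    by (simp add: map_bind_pmf)
  also have "\<dots> = bind_pmf (coupled_law \<mu>0 K t) (\<lambda>x. kernel Y (snd x))"
    using assms by (intro bind_pmf_cong) (auto simp: markovian_coupling_def is_coupling_def)
  also have "\<dots> = bind_pmf (map_pmf snd (coupled_law \<mu>0 K t)) (kernel Y)"
    by (simp add: bind_map_pmf)
  finally show ?case using Suc by simp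
qed

definition glue :: "('a \<times> 'b) pmf \<Rightarrow> ('b \<times> 'c) pmf \<Rightarrow> ('a \<times> 'b \<times> 'c) pmf" where
  "glue \<alpha> \<beta> = bind_pmf \<alpha> (\<lambda>(a, b). map_pmf (\<lambda>q. (a, b, snd q)) (cond_pmf \<beta> {q. fst q = b}))"

lemma glue12: "map_pmf (\<lambda>(a, b, c). (a, b)) (glue \<alpha> \<beta>) = \<alpha>"
proof -
  have "map_pmf (\<lambda>(a, b, c). (a, b)) (glue \<alpha> \<beta>) = bind_pmf \<alpha> (\<lambda>x. return_pmf x)"
    unfolding glue_def map_bind_pmf
    by (intro bind_pmf_cong) (auto simp: pmf.map_comp o_def map_pmf_const)
  then show ?thesis by (simp add: bind_return_pmf')
qed

lemma glue23:
  assumes "map_pmf snd \<alpha> = map_pmf fst \<beta>"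
  shows "map_pmf (\<lambda>(a, b, c). (b, c)) (glue \<alpha> \<beta>) = \<beta>"
proof -
  have ne: "set_pmf \<beta> \<inter> {q. fst q = b} \<noteq> {}" if "b \<in> set_pmf (map_pmf fst \<beta>)" for b
    using that by auto
  have "map_pmf (\<lambda>(a, b, c). (b, c)) (glue \<alpha> \<beta>) = bind_pmf \<alpha> (\<lambda>x. cond_pmf \<beta> {q. fst q = snd x})"
    unfolding glue_def map_bind_pmf
  proof (intro bind_pmf_cong refl)
    fix x assume x: "x \<in> set_pmf \<alpha>"
    obtain a b where xab: "x = (a, b)" by (cases x)
    have "b \<in> set_pmf (map_pmf fst \<beta>)" using x xab assms[symmetric] by (metis pmf.set_map imageI snd_conv)
    then have n: "set_pmf \<beta> \<inter> {q. fst q = b} \<noteq> {}" by (rule ne)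
    have "map_pmf (\<lambda>q. (b, snd q)) (cond_pmf \<beta> {q. fst q = b}) = map_pmf id (cond_pmf \<beta> {q. fst q = b})"
      by (rule map_pmf_cong) (auto simp: set_cond_pmf[OF n])
    then show "map_pmf (\<lambda>(a, b, c). (b, c)) (case x of (a, b) \<Rightarrow> map_pmf (\<lambda>q. (a, b, snd q)) (cond_pmf \<beta> {q. fst q = b}))
           = cond_pmf \<beta> {q. fst q = snd x}"
      by (simp add: xab pmf.map_comp o_def)
  qed
  also have "\<dots> = bind_pmf (map_pmf snd \<alpha>) (\<lambda>b. cond_pmf \<beta> {q. fst q = b})"
    by (simp add: bind_map_pmf o_def)
  also have "\<dots> = bind_pmf (map_pmf fst \<beta>) (\<lambda>b. cond_pmf \<beta> {q. fst q = b})"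
    using assms by simp
  also have "\<dots> = \<beta>"
  proof (rule bind_cond_pmf_cancel)
    show "\<And>x. x \<in> set_pmf (map_pmf fst \<beta>) \<Longrightarrow> set_pmf \<beta> \<inter> {y. fst y = x} \<noteq> {}" using ne by blast
    show "\<And>y. y \<in> set_pmf \<beta> \<Longrightarrow> set_pmf (map_pmf fst \<beta>) \<inter> {x. fst y = x} \<noteq> {}" by auto
    show "\<And>x y. x \<in> set_pmf (map_pmf fst \<beta>) \<Longrightarrow> y \<in> set_pmf \<beta> \<Longrightarrow> fst y = x \<Longrightarrow>
             measure_pmf.prob \<beta> {y. fst y = x} = measure_pmf.prob (map_pmf fst \<beta>) {x. fst y = x}"
      by (auto simp: measure_map_pmf vimage_def eq_commute)
  qed
  finally show ?thesis .
qed



lemma markovize: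
  fixes \<rho> :: "nat \<Rightarrow> 's pmf" and f :: "'s \<Rightarrow> 'a \<times> 'b" and L :: "nat \<Rightarrow> 's \<Rightarrow> 's pmf"
  assumes step: "\<And>t. \<rho> (Suc t) = bind_pmf (\<rho> t) (L t)"
  and ini: "is_coupling (map_pmf f (\<rho> 0)) (init X) (init Z)"
  and kx: "\<And>t s. s \<in> set_pmf (\<rho> t) \<Longrightarrow> map_pmf (fst \<circ> f) (L t s) = kernel X (fst (f s))"
  and kz: "\<And>t s. s \<in> set_pmf (\<rho> t) \<Longrightarrow> map_pmf (snd \<circ> f) (L t s) = kernel Z (snd (f s))"
  shows "\<exists>K. markovian_coupling X Z (map_pmf f (\<rho> 0)) K \<and>
             (\<forall>t. coupled_law (map_pmf f (\<rho> 0)) K t = map_pmf f (\<rho> t))"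
proof -
  define K where "K t v = (if v \<in> set_pmf (map_pmf f (\<rho> t))
      then map_pmf f (bind_pmf (cond_pmf (\<rho> t) {s. f s = v}) (L t))
      else pair_pmf (kernel X (fst v)) (kernel Z (snd v)))" for t v
  have ne: "set_pmf (\<rho> t) \<inter> {s. f s = v} \<noteq> {}" if "v \<in> set_pmf (map_pmf f (\<rho> t))" for t v
    using that by auto
  have cp: "is_coupling (K t v) (kernel X (fst v)) (kernel Z (snd v))" for t v
  proof (cases "v \<in> set_pmf (map_pmf f (\<rho> t))")
    case True
    note n = ne[OF True]
    have "map_pmf fst (K t v) = bind_pmf (cond_pmf (\<rho> t) {s. f s = v}) (\<lambda>s. map_pmf (fst \<circ> f) (L t s))"
      using True by (simp add: K_def map_bind_pmf pmf.map_comp)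
    also have "\<dots> = bind_pmf (cond_pmf (\<rho> t) {s. f s = v}) (\<lambda>s. kernel X (fst v))"
      by (intro bind_pmf_cong refl) (auto simp: set_cond_pmf[OF n] kx)
    finally have 1: "map_pmf fst (K t v) = kernel X (fst v)" by simp
    have "map_pmf snd (K t v) = bind_pmf (cond_pmf (\<rho> t) {s. f s = v}) (\<lambda>s. map_pmf (snd \<circ> f) (L t s))"
      using True by (simp add: K_def map_bind_pmf pmf.map_comp)
    also have "\<dots> = bind_pmf (cond_pmf (\<rho> t) {s. f s = v}) (\<lambda>s. kernel Z (snd v))"
      by (intro bind_pmf_cong refl) (auto simp: set_cond_pmf[OF n] kz)
    finally have 2: "map_pmf snd (K t v) = kernel Z (snd v)" by simp
    show ?thesis using 1 2 by (simp add: is_coupling_def)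
  next
    case False
    then show ?thesis by (simp add: K_def is_coupling_def map_fst_pair_pmf map_snd_pair_pmf)
  qed
  have law: "coupled_law (map_pmf f (\<rho> 0)) K t = map_pmf f (\<rho> t)" for t
  proof (induction t)
    case 0 show ?case by simp
  next
    case (Suc t)
    have "coupled_law (map_pmf f (\<rho> 0)) K (Suc t) = bind_pmf (\<rho> t) (\<lambda>s. K t (f s))"
      using Suc by (simp add: bind_map_pmf o_def)
    also have "\<dots> = bind_pmf (\<rho> t) (\<lambda>s. map_pmf f (bind_pmf (cond_pmf (\<rho> t) {s'. f s' = f s}) (L t)))"
      by (intro bind_pmf_cong refl) (simp add: K_def)
    also have "\<dots> = map_pmf f (bind_pmf (bind_pmf (\<rho> t) (\<lambda>s. cond_pmf (\<rho> t) {s'. f s' = f s})) (L t))"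
      by (simp add: map_bind_pmf bind_assoc_pmf)
    also have "bind_pmf (\<rho> t) (\<lambda>s. cond_pmf (\<rho> t) {s'. f s' = f s}) = \<rho> t"
      by (rule bind_cond_pmf_cancel) (auto simp: eq_commute)
    finally show ?case using step by simp
  qed
  show ?thesis
    using ini cp law by (intro exI[of _ K]) (auto simp: markovian_coupling_def)
qed




lemma diffP1:
  assumes "is_coupling \<gamma> \<alpha> \<beta>"
  shows "pmf \<alpha> z - pmf \<beta> z \<le> measure_pmf.prob \<gamma> {v. fst v \<noteq> snd v}"
proof -
  have a: "pmf \<alpha> z = measure_pmf.prob \<gamma> {v. fst v = z}"
    using assms by (auto simp: is_coupling_def pmf_map vimage_def)
  have b: "pmf \<beta> z = measure_pmf.prob \<gamma> {v. snd v = z}"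
    using assms by (auto simp: is_coupling_def pmf_map vimage_def)
  have "measure_pmf.prob \<gamma> {v. fst v = z} \<le> measure_pmf.prob \<gamma> ({v. snd v = z} \<union> {v. fst v \<noteq> snd v})"
    by (rule measure_pmf.finite_measure_mono) auto
  also have "\<dots> \<le> measure_pmf.prob \<gamma> {v. snd v = z} + measure_pmf.prob \<gamma> {v. fst v \<noteq> snd v}"
    by (rule measure_Un_le) auto
  finally show ?thesis using a b by simp
qed

lemma diffP:
  assumes "is_coupling \<gamma> \<alpha> \<beta>"
  shows "\<bar>pmf \<alpha> z - pmf \<beta> z\<bar> \<le> measure_pmf.prob \<gamma> {v. fst v \<noteq> snd v}"
proof -
  have "is_coupling (map_pmf prod.swap \<gamma>) \<beta> \<alpha>"
    using assms by (simp add: is_coupling_def pmf.map_comp o_def fst_swap snd_swap)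
  from diffP1[OF this, of z] have "pmf \<beta> z - pmf \<alpha> z \<le> measure_pmf.prob \<gamma> {v. fst v \<noteq> snd v}"
    by (simp add: measure_map_pmf vimage_def eq_commute)
  with diffP1[OF assms, of z] show ?thesis by linarith
qed

lemma stepP:
  fixes \<nu> :: "('s::finite) pmf"
  shows "pmf \<nu> s * measure_pmf.prob (K s) A \<le> measure_pmf.prob (bind_pmf \<nu> K) A"
proof -
  have "measure_pmf.prob (bind_pmf \<nu> K) A = measure_pmf.expectation \<nu> (\<lambda>x. measure_pmf.prob (K x) A)"
    unfolding measure_pmf_bind
    by (rule measure_pmf.measure_bind[where N="count_space UNIV"])
       (auto simp: space_subprob_algebra measure_pmf.subprob_space_axioms prob_space_imp_subprob_space prob_space_measure_pmf)
  also have "\<dots> = (\<Sum>a\<in>UNIV. measure_pmf.prob (K a) A * pmf \<nu> a)" by (rule exp_fin)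
  finally have e: "measure_pmf.prob (bind_pmf \<nu> K) A = (\<Sum>a\<in>UNIV. measure_pmf.prob (K a) A * pmf \<nu> a)" .
  have "measure_pmf.prob (K s) A * pmf \<nu> s \<le> (\<Sum>a\<in>UNIV. measure_pmf.prob (K a) A * pmf \<nu> a)"
    by (rule member_le_sum) auto
  then show ?thesis using e by (simp add: mult.commute)
qed

lemma diagP:
  "pmf (map_pmf fst \<nu>) x - measure_pmf.prob \<nu> {v. fst v \<noteq> snd v} \<le> pmf \<nu> (x, x)"
proof -
  have "pmf (map_pmf fst \<nu>) x = measure_pmf.prob \<nu> {v. fst v = x}"
    by (simp add: pmf_map vimage_def)
  also have "\<dots> \<le> measure_pmf.prob \<nu> ({(x, x)} \<union> {v. fst v \<noteq> snd v})"
    by (rule measure_pmf.finite_measure_mono) auto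
  also have "\<dots> \<le> measure_pmf.prob \<nu> {(x, x)} + measure_pmf.prob \<nu> {v. fst v \<noteq> snd v}"
    by (rule measure_Un_le) auto
  finally show ?thesis by (simp add: measure_pmf_single)
qed

lemma markovP:
  fixes \<nu> :: "('a::finite \<times> 'a) pmf"
  assumes "\<delta> > 0" "\<And>u v. u \<noteq> v \<Longrightarrow> \<delta> \<le> d u v" "\<And>u v. 0 \<le> d u v"
  shows "\<delta> * measure_pmf.prob \<nu> {v. fst v \<noteq> snd v} \<le> measure_pmf.expectation \<nu> (\<lambda>(x, y). d x y)"
proof -
  have "\<delta> * measure_pmf.prob \<nu> {v. fst v \<noteq> snd v} = measure_pmf.expectation \<nu> (\<lambda>v. \<delta> * indicator {v. fst v \<noteq> snd v} v)"
    by simp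
  also have "\<dots> \<le> measure_pmf.expectation \<nu> (\<lambda>(x, y). d x y)"
    by (rule integral_mono) (use assms in \<open>auto intro!: integrable_measure_pmf_finite split: split_indicator\<close>)
  finally show ?thesis .
qed

lemma costP:
  fixes d :: "'a::finite \<Rightarrow> 'a \<Rightarrow> real"
  assumes "\<And>u v. 0 \<le> d u v"
  shows "pmf p t * measure_pmf.expectation (coupled_law \<mu>0 K t) (\<lambda>(x, y). d x y) \<le> coupling_cost p \<mu>0 K d"
  unfolding coupling_cost_def
  by (rule exp_p_lower[OF int_p]) (auto intro!: Bochner_Integration.integral_nonneg simp: assms)

lemma limit_arg:
  fixes q A B D :: real
  assumes "q > 0" "A \<ge> 0" "B > 0" "D \<ge> 0" "\<And>c. c > 0 \<Longrightarrow> (q - c * A) * D \<le> c * B"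
  shows "D = 0"
proof (rule ccontr)
  assume "D \<noteq> 0" then have D: "D > 0" using assms by simp
  define c where "c = min (q / (2 * (A + 1))) (q * D / (4 * B))"
  have c0: "c > 0" using assms D by (simp add: c_def)
  have "c * A \<le> q / 2"
  proof -
    have "c * A \<le> q / (2 * (A + 1)) * A" using assms by (intro mult_right_mono) (auto simp: c_def)
    also have "\<dots> \<le> q / 2" using assms by (simp add: field_simps)
    finally show ?thesis .
  qed
  then have "q / 2 * D \<le> (q - c * A) * D" using D by (intro mult_right_mono) auto
  also have "\<dots> \<le> c * B" using assms(5)[OF c0] .
  also have "\<dots> \<le> q * D / (4 * B) * B" using assms by (intro mult_right_mono) (auto simp: c_def)
  also have "\<dots> = q * D / 4" using assms by simp
  finally show False using assms D by (simp add: field_simps)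
qed

lemma last_path: "map_pmf last (path_law X n) = mlaw X n"
proof (induction n)
  case 0 then show ?case by (simp add: pmf.map_comp o_def)
next
  case (Suc n)
  have "map_pmf last (path_law X (Suc n)) = bind_pmf (path_law X n) (\<lambda>xs. kernel X (last xs))"
    by (simp add: map_bind_pmf pmf.map_comp o_def)
  also have "\<dots> = bind_pmf (map_pmf last (path_law X n)) (kernel X)" by (simp add: bind_map_pmf o_def)
  finally show ?case using Suc by simp
qed



lemma prod_coupling:
  "markovian_coupling X Y (pair_pmf (init X) (init Y)) (\<lambda>t v. pair_pmf (kernel X (fst v)) (kernel Y (snd v)))"
  by (auto simp: markovian_coupling_def is_coupling_def map_fst_pair_pmf map_snd_pair_pmf)

lemma cs_ne: "{(\<mu>0, K). markovian_coupling X Y \<mu>0 K} \<noteq> {}"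
  using prod_coupling by blast

lemma cost_nonneg:
  assumes "\<And>u v. 0 \<le> C u v"
  shows "0 \<le> coupling_cost p \<mu>0 K C"
  unfolding coupling_cost_def
  by (auto intro!: Bochner_Integration.integral_nonneg simp: assms)

lemma d_le:
  assumes "\<And>u v. 0 \<le> C u v" "markovian_coupling X Y \<mu>0 K"
  shows "d_OTM p X Y C \<le> coupling_cost p \<mu>0 K C"
proof -
  have "bdd_below ((\<lambda>(\<mu>0, K). coupling_cost p \<mu>0 K C) ` {(\<mu>0, K). markovian_coupling X Y \<mu>0 K})"
    by (rule bdd_belowI[where m=0]) (auto intro: cost_nonneg assms(1))
  from cINF_lower[OF this, of "(\<mu>0, K)"] assms(2) show ?thesis
    by (simp add: d_OTM_def)
qed

lemma d_ge:
  assumes "\<And>\<mu>0 K. markovian_coupling X Y \<mu>0 K \<Longrightarrow> c \<le> coupling_cost p \<mu>0 K C"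
  shows "c \<le> d_OTM p X Y C"
  unfolding d_OTM_def by (rule cINF_greatest[OF cs_ne]) (auto intro: assms)

lemma d_less:
  assumes "\<And>u v. 0 \<le> C u v" "d_OTM p X Y C < c"
  shows "\<exists>\<mu>0 K. markovian_coupling X Y \<mu>0 K \<and> coupling_cost p \<mu>0 K C < c"
proof -
  have "bdd_below ((\<lambda>(\<mu>0, K). coupling_cost p \<mu>0 K C) ` {(\<mu>0, K). markovian_coupling X Y \<mu>0 K})"
    by (rule bdd_belowI[where m=0]) (auto intro: cost_nonneg assms(1))
  from cINF_less_iff[OF cs_ne this] assms(2) show ?thesis
    by (auto simp: d_OTM_def)
qed

lemma diag_zero:
  assumes "\<And>u. C u u = 0"
  shows "\<exists>\<mu>0 K. markovian_coupling X X \<mu>0 K \<and> coupling_cost p \<mu>0 K C = 0"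
proof -
  define \<mu>0 where "\<mu>0 = map_pmf (\<lambda>x. (x, x)) (init X)"
  define K where "K t v = (if fst v = snd v then map_pmf (\<lambda>x. (x, x)) (kernel X (fst v))
     else pair_pmf (kernel X (fst v)) (kernel X (snd v)))" for t :: nat and v
  have mc: "markovian_coupling X X \<mu>0 K"
    by (auto simp: markovian_coupling_def is_coupling_def \<mu>0_def K_def pmf.map_comp o_def
        map_fst_pair_pmf map_snd_pair_pmf)
  have diag: "set_pmf (coupled_law \<mu>0 K t) \<subseteq> {v. fst v = snd v}" for t
    by (induction t) (auto simp: \<mu>0_def K_def)
  have "measure_pmf.expectation (coupled_law \<mu>0 K t) (\<lambda>(x, y). C x y) = 0" for t
  proof -
    have "measure_pmf.expectation (coupled_law \<mu>0 K t) (\<lambda>(x, y). C x y) =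
          measure_pmf.expectation (coupled_law \<mu>0 K t) (\<lambda>_. 0)"
      by (rule integral_cong_AE) (use diag[of t] assms in \<open>auto simp: AE_measure_pmf_iff\<close>)
    then show ?thesis by simp
  qed
  then have "coupling_cost p \<mu>0 K C = 0" by (simp add: coupling_cost_def)
  with mc show ?thesis by blast
qed

lemma swap_cost:
  assumes "\<And>u v. C u v = C v u" "markovian_coupling Y X \<mu>0 K"
  shows "\<exists>\<mu>0' K'. markovian_coupling X Y \<mu>0' K' \<and> coupling_cost p \<mu>0' K' C = coupling_cost p \<mu>0 K C"
proof -
  define \<mu>0' where "\<mu>0' = map_pmf prod.swap \<mu>0"
  define K' where "K' t v = map_pmf prod.swap (K t (prod.swap v))" for t :: nat and v
  have mc: "markovian_coupling X Y \<mu>0' K'"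
    using assms(2) by (auto simp: markovian_coupling_def is_coupling_def \<mu>0'_def K'_def pmf.map_comp o_def)
  have law: "coupled_law \<mu>0' K' t = map_pmf prod.swap (coupled_law \<mu>0 K t)" for t
    by (induction t) (auto simp: \<mu>0'_def K'_def bind_map_pmf map_bind_pmf o_def)
  have "coupling_cost p \<mu>0' K' C = coupling_cost p \<mu>0 K C"
    unfolding coupling_cost_def law
    by (simp add: integral_map_pmf case_prod_beta assms(1) split_beta')
  with mc show ?thesis by blast
qed



fun trip :: "('a \<times> 'b) pmf \<Rightarrow> ('b \<times> 'c) pmf \<Rightarrow> (nat \<Rightarrow> 'a \<times> 'b \<Rightarrow> ('a \<times> 'b) pmf)
    \<Rightarrow> (nat \<Rightarrow> 'b \<times> 'c \<Rightarrow> ('b \<times> 'c) pmf) \<Rightarrow> nat \<Rightarrow> ('a \<times> 'b \<times> 'c) pmf" where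
  "trip \<mu> \<mu>' K K' 0 = glue \<mu> \<mu>'"
| "trip \<mu> \<mu>' K K' (Suc t) = bind_pmf (trip \<mu> \<mu>' K K' t) (\<lambda>(x, y, z). glue (K t (x, y)) (K' t (y, z)))"

lemma trip12: "map_pmf (\<lambda>(a, b, c). (a, b)) (trip \<mu> \<mu>' K K' t) = coupled_law \<mu> K t"
proof (induction t)
  case 0 then show ?case by (simp add: glue12)
next
  case (Suc t)
  have "map_pmf (\<lambda>(a, b, c). (a, b)) (trip \<mu> \<mu>' K K' (Suc t)) =
        bind_pmf (trip \<mu> \<mu>' K K' t) (\<lambda>s. K t ((\<lambda>(a, b, c). (a, b)) s))"
    unfolding trip.simps map_bind_pmf by (intro bind_pmf_cong refl) (auto simp: glue12)
  also have "\<dots> = bind_pmf (map_pmf (\<lambda>(a, b, c). (a, b)) (trip \<mu> \<mu>' K K' t)) (K t)"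
    by (simp add: bind_map_pmf o_def)
  finally show ?case using Suc by simp
qed

lemma glueK23:
  assumes "markovian_coupling X Y \<mu> K" "markovian_coupling Y Z \<mu>' K'"
  shows "map_pmf (\<lambda>(a, b, c). (b, c)) (glue (K t (x, y)) (K' t (y, z))) = K' t (y, z)"
proof (rule glue23)
  show "map_pmf snd (K t (x, y)) = map_pmf fst (K' t (y, z))"
    using assms by (simp add: markovian_coupling_def is_coupling_def)
qed

lemma trip23:
  assumes "markovian_coupling X Y \<mu> K" "markovian_coupling Y Z \<mu>' K'"
  shows "map_pmf (\<lambda>(a, b, c). (b, c)) (trip \<mu> \<mu>' K K' t) = coupled_law \<mu>' K' t"
proof (induction t)
  case 0
  show ?case unfolding trip.simps coupled_law.simps
  proof (rule glue23)
    show "map_pmf snd \<mu> = map_pmf fst \<mu>'" using assms by (simp add: markovian_coupling_def is_coupling_def)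
  qed
next
  case (Suc t)
  have "map_pmf (\<lambda>(a, b, c). (b, c)) (trip \<mu> \<mu>' K K' (Suc t)) =
        bind_pmf (trip \<mu> \<mu>' K K' t) (\<lambda>s. K' t ((\<lambda>(a, b, c). (b, c)) s))"
    unfolding trip.simps map_bind_pmf
    apply (intro bind_pmf_cong refl)
    subgoal for s by (cases s) (simp only: prod.case glueK23[OF assms])
    done
  also have "\<dots> = bind_pmf (map_pmf (\<lambda>(a, b, c). (b, c)) (trip \<mu> \<mu>' K K' t)) (K' t)"
    by (simp add: bind_map_pmf o_def)
  finally show ?case by (simp only: coupled_law.simps Suc.IH)
qed

lemma triangle_cost:
  fixes d :: "'a::finite \<Rightarrow> 'a \<Rightarrow> real"
  assumes pm: "is_pseudometric d"
    and mc1: "markovian_coupling X Y \<mu> K" and mc2: "markovian_coupling Y Z \<mu>' K'"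
  shows "\<exists>\<mu>'' K''. markovian_coupling X Z \<mu>'' K'' \<and>
           coupling_cost p \<mu>'' K'' d \<le> coupling_cost p \<mu> K d + coupling_cost p \<mu>' K' d"
proof -
  define \<rho> where "\<rho> = trip \<mu> \<mu>' K K'"
  define L where "L t = (\<lambda>(x, y, z). glue (K t (x, y)) (K' t (y, z)))" for t
  define f where "f = (\<lambda>(x::'a, y::'a, z::'a). (x, z))"
  have f1: "fst \<circ> f = fst \<circ> (\<lambda>(a, b, c). (a, b))" by (auto simp: f_def)
  have f2: "snd \<circ> f = snd \<circ> (\<lambda>(a, b, c). (b, c))" by (auto simp: f_def)
  have step: "\<rho> (Suc t) = bind_pmf (\<rho> t) (L t)" for t by (simp add: \<rho>_def L_def)
  have ini: "is_coupling (map_pmf f (\<rho> 0)) (init X) (init Z)"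
  proof -
    have "map_pmf fst (map_pmf f (\<rho> 0)) = map_pmf fst (map_pmf (\<lambda>(a, b, c). (a, b)) (\<rho> 0))"
      by (simp add: pmf.map_comp f1)
    moreover have "map_pmf snd (map_pmf f (\<rho> 0)) = map_pmf snd (map_pmf (\<lambda>(a, b, c). (b, c)) (\<rho> 0))"
      by (simp add: pmf.map_comp f2)
    ultimately show ?thesis
      using trip12[of \<mu> \<mu>' K K' 0] trip23[OF mc1 mc2, of 0] mc1 mc2
      by (simp add: \<rho>_def is_coupling_def markovian_coupling_def)
  qed
  have kx: "map_pmf (fst \<circ> f) (L t s) = kernel X (fst (f s))" for t s
  proof -
    obtain x y z where s: "s = (x, y, z)" by (cases s)
    have "map_pmf (fst \<circ> f) (L t s) = map_pmf fst (map_pmf (\<lambda>(a, b, c). (a, b)) (L t s))"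
      by (simp add: pmf.map_comp f1)
    also have "\<dots> = kernel X x" using mc1 by (simp add: s L_def glue12 markovian_coupling_def is_coupling_def)
    finally show ?thesis by (simp add: s f_def)
  qed
  have kz: "map_pmf (snd \<circ> f) (L t s) = kernel Z (snd (f s))" for t s
  proof -
    obtain x y z where s: "s = (x, y, z)" by (cases s)
    have "map_pmf (snd \<circ> f) (L t s) = map_pmf snd (map_pmf (\<lambda>(a, b, c). (b, c)) (L t s))"
      by (simp add: pmf.map_comp f2)
    also have "\<dots> = map_pmf snd (K' t (y, z))" by (simp only: s L_def glueK23[OF mc1 mc2] prod.case)
    also have "\<dots> = kernel Z z" using mc2 by (simp add: markovian_coupling_def is_coupling_def)
    finally show ?thesis by (simp add: s f_def)
  qed
  obtain K'' where mc: "markovian_coupling X Z (map_pmf f (\<rho> 0)) K''"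
    and law: "\<And>t. coupled_law (map_pmf f (\<rho> 0)) K'' t = map_pmf f (\<rho> t)"
    using markovize[of \<rho> L f X Z, OF step ini kx kz] by blast
  have e1: "measure_pmf.expectation (coupled_law \<mu> K t) (\<lambda>(x, y). d x y) =
            measure_pmf.expectation (\<rho> t) (\<lambda>(x, y, z). d x y)" for t
    unfolding trip12[of \<mu> \<mu>' K K' t, symmetric] \<rho>_def
    by (simp add: integral_map_pmf case_prod_beta split_beta')
  have e2: "measure_pmf.expectation (coupled_law \<mu>' K' t) (\<lambda>(x, y). d x y) =
            measure_pmf.expectation (\<rho> t) (\<lambda>(x, y, z). d y z)" for t
    unfolding trip23[OF mc1 mc2, of t, symmetric] \<rho>_def
    by (simp add: integral_map_pmf case_prod_beta split_beta')
  have e3: "measure_pmf.expectation (coupled_law (map_pmf f (\<rho> 0)) K'' t) (\<lambda>(x, y). d x y) =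
            measure_pmf.expectation (\<rho> t) (\<lambda>(x, y, z). d x z)" for t
    unfolding law by (simp add: integral_map_pmf case_prod_beta split_beta' f_def)
  have inner: "measure_pmf.expectation (\<rho> t) (\<lambda>(x, y, z). d x z) \<le>
      measure_pmf.expectation (\<rho> t) (\<lambda>(x, y, z). d x y) + measure_pmf.expectation (\<rho> t) (\<lambda>(x, y, z). d y z)" for t
  proof -
    have "measure_pmf.expectation (\<rho> t) (\<lambda>(x, y, z). d x z) \<le>
          measure_pmf.expectation (\<rho> t) (\<lambda>s. (\<lambda>(x, y, z). d x y) s + (\<lambda>(x, y, z). d y z) s)"
      by (rule integral_mono) (use pm in \<open>auto intro!: integrable_measure_pmf_finite simp: is_pseudometric_def\<close>)
    also have "\<dots> = measure_pmf.expectation (\<rho> t) (\<lambda>(x, y, z). d x y) + measure_pmf.expectation (\<rho> t) (\<lambda>(x, y, z). d y z)"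
      by (rule Bochner_Integration.integral_add) (auto intro!: integrable_measure_pmf_finite)
    finally show ?thesis .
  qed
  have "coupling_cost p (map_pmf f (\<rho> 0)) K'' d \<le>
        measure_pmf.expectation p (\<lambda>t. measure_pmf.expectation (coupled_law \<mu> K t) (\<lambda>(x, y). d x y)
             + measure_pmf.expectation (coupled_law \<mu>' K' t) (\<lambda>(x, y). d x y))"
    unfolding coupling_cost_def e1 e2 e3
    by (rule integral_mono) (auto intro!: inner Bochner_Integration.integrable_add int_p)
  also have "\<dots> = coupling_cost p \<mu> K d + coupling_cost p \<mu>' K' d"
    unfolding coupling_cost_def by (rule Bochner_Integration.integral_add) (auto intro!: int_p)
  finally show ?thesis using mc by blast
qed



lemma delta_exists:
  fixes d :: "'a::finite \<Rightarrow> 'a \<Rightarrow> real"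
  assumes "is_metric d"
  shows "\<exists>\<delta>>0. \<forall>u v. u \<noteq> v \<longrightarrow> \<delta> \<le> d u v"
proof -
  define D where "D = (\<lambda>(u, v). d u v) ` {(u, v). u \<noteq> v}"
  have fin: "finite D" by (simp add: D_def)
  have pos: "\<forall>e\<in>D. e > 0"
    using assms by (fastforce simp: D_def is_metric_def is_pseudometric_def order_le_less)
  show ?thesis
  proof (cases "D = {}")
    case True
    then show ?thesis by (intro exI[of _ 1]) (auto simp: D_def)
  next
    case False
    have "Min D > 0" using Min_in[OF fin False] pos by blast
    moreover have "\<forall>u v. u \<noteq> v \<longrightarrow> Min D \<le> d u v"
      using fin by (auto simp: D_def intro!: Min_le)
    ultimately show ?thesis by blast
  qed
qed

lemma metric_part:
  fixes d :: "'a::finite \<Rightarrow> 'a \<Rightarrow> real"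
  assumes met: "is_metric d" and pp: "\<forall>t. pmf p t > 0" and z: "d_OTM p X1 X2 d = 0"
  shows "path_law X1 n = path_law X2 n"
proof -
  obtain \<delta> where \<delta>: "\<delta> > 0" "\<And>u v. u \<noteq> v \<Longrightarrow> \<delta> \<le> d u v" using delta_exists[OF met] by blast
  have nn: "\<And>u v. 0 \<le> d u v" using met by (simp add: is_metric_def is_pseudometric_def)
  have bound: "measure_pmf.prob (coupled_law \<mu>0 K t) {v. fst v \<noteq> snd v} \<le> c * (1 / (pmf p t * \<delta>))"
    if "coupling_cost p \<mu>0 K d < c" for \<mu>0 K t c
  proof -
    let ?P = "measure_pmf.prob (coupled_law \<mu>0 K t) {v. fst v \<noteq> snd v}"
    let ?E = "measure_pmf.expectation (coupled_law \<mu>0 K t) (\<lambda>(x, y). d x y)"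
    have 1: "\<delta> * ?P \<le> ?E" by (rule markovP) (use \<delta> nn in auto)
    have 2: "pmf p t * ?E \<le> coupling_cost p \<mu>0 K d" by (rule costP) (use nn in auto)
    have pt: "pmf p t > 0" using pp by auto
    have "pmf p t * (\<delta> * ?P) \<le> pmf p t * ?E" using 1 pt by (intro mult_left_mono) auto
    then have "(pmf p t * \<delta>) * ?P \<le> c" using 2 that by (simp add: mult.assoc)
    then show ?thesis using pt \<delta> by (simp add: field_simps)
  qed
  have small: "\<exists>\<mu>0 K. markovian_coupling X1 X2 \<mu>0 K \<and> coupling_cost p \<mu>0 K d < c" if "c > 0" for c
    by (rule d_less) (use nn z that in auto)
  have ini: "init X1 = init X2"
  proof (rule pmf_eqI)
    fix w
    let ?D = "\<bar>pmf (init X1) w - pmf (init X2) w\<bar>"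
    have "?D = 0"
    proof (rule limit_arg[where q=1 and A=0 and B="1 / (pmf p 0 * \<delta>)"])
      show "0 < (1 / (pmf p 0 * \<delta>))" using pp \<delta> by auto
      fix c :: real assume "c > 0"
      then obtain \<mu>0 K where mc: "markovian_coupling X1 X2 \<mu>0 K" and cc: "coupling_cost p \<mu>0 K d < c"
        using small by blast
      have "?D \<le> measure_pmf.prob (coupled_law \<mu>0 K 0) {v. fst v \<noteq> snd v}"
        using mc by (auto intro!: diffP simp: markovian_coupling_def)
      also have "\<dots> \<le> c * (1 / (pmf p 0 * \<delta>))" by (rule bound[OF cc])
      finally show "(1 - c * 0) * ?D \<le> c * (1 / (pmf p 0 * \<delta>))" by simp
    qed auto
    then show "pmf (init X1) w = pmf (init X2) w" by simp
  qed
  have ker: "kernel X1 x = kernel X2 x" if x: "x \<in> set_pmf (mlaw X1 m)" for m x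
  proof (rule pmf_eqI)
    fix w
    let ?D = "\<bar>pmf (kernel X1 x) w - pmf (kernel X2 x) w\<bar>"
    let ?q = "pmf (mlaw X1 m) x"
    have "?D = 0"
    proof (rule limit_arg[where q="?q" and A="1 / (pmf p m * \<delta>)" and B="1 / (pmf p (Suc m) * \<delta>)"])
      show "0 < ?q" using x by (simp add: pmf_positive)
      show "0 < (1 / (pmf p (Suc m) * \<delta>))" using pp \<delta> by auto
      show "0 \<le> (1 / (pmf p m * \<delta>))" using pp \<delta> by auto
      fix c :: real assume "c > 0"
      then obtain \<mu>0 K where mc: "markovian_coupling X1 X2 \<mu>0 K" and cc: "coupling_cost p \<mu>0 K d < c"
        using small by blast
      let ?\<nu> = "coupled_law \<mu>0 K m"
      let ?Pm = "measure_pmf.prob ?\<nu> {v. fst v \<noteq> snd v}"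
      let ?PK = "measure_pmf.prob (K m (x, x)) {v. fst v \<noteq> snd v}"
      have Pm: "?Pm \<le> c * (1 / (pmf p m * \<delta>))" by (rule bound[OF cc])
      have PS: "measure_pmf.prob (coupled_law \<mu>0 K (Suc m)) {v. fst v \<noteq> snd v} \<le> c * (1 / (pmf p (Suc m) * \<delta>))"
        by (rule bound[OF cc])
      have dg: "?q - ?Pm \<le> pmf ?\<nu> (x, x)"
        using diagP[of ?\<nu> x] coupled_fst[OF mc, of m] by simp
      have dk: "?D \<le> ?PK"
        using mc by (auto intro!: diffP simp: markovian_coupling_def)
      have st: "pmf ?\<nu> (x, x) * ?PK \<le> measure_pmf.prob (coupled_law \<mu>0 K (Suc m)) {v. fst v \<noteq> snd v}"
        using stepP[of ?\<nu> "(x, x)" "K m"] by simp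
      have "(?q - c * (1 / (pmf p m * \<delta>))) * ?D \<le> (?q - ?Pm) * ?D"
        using Pm by (intro mult_right_mono) auto
      also have "\<dots> \<le> pmf ?\<nu> (x, x) * ?D" using dg by (intro mult_right_mono) auto
      also have "\<dots> \<le> pmf ?\<nu> (x, x) * ?PK" using dk by (intro mult_left_mono) auto
      also have "\<dots> \<le> c * (1 / (pmf p (Suc m) * \<delta>))" using st PS by linarith
      finally show "(?q - c * (1 / (pmf p m * \<delta>))) * ?D \<le> c * (1 / (pmf p (Suc m) * \<delta>))" .
    qed auto
    then show "pmf (kernel X1 x) w = pmf (kernel X2 x) w" by simp
  qed
  show ?thesis
  proof (induction n)
    case 0 then show ?case using ini by simp
  next
    case (Suc n)
    have "path_law X1 (Suc n) = bind_pmf (path_law X1 n) (\<lambda>xs. map_pmf (\<lambda>y. xs @ [y]) (kernel X2 (last xs)))"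
    proof (simp only: path_law.simps, intro bind_pmf_cong refl)
      fix xs assume "xs \<in> set_pmf (path_law X1 n)"
      then have "last xs \<in> set_pmf (mlaw X1 n)" by (simp flip: last_path[of X1 n])
      then show "map_pmf (\<lambda>y. xs @ [y]) (kernel X1 (last xs)) = map_pmf (\<lambda>y. xs @ [y]) (kernel X2 (last xs))"
        using ker by simp
    qed
    then show ?case using Suc by simp
  qed
qed



theorem proposition34:
  fixes dX :: "'a::finite \<Rightarrow> 'a \<Rightarrow> real" and p :: "nat pmf"
  assumes "is_pseudometric dX"
  shows "is_pseudometric (\<lambda>X1 X2 :: 'a mchain. d_OTM p X1 X2 dX) \<and>
         ((is_metric dX \<and> (\<forall>t. pmf p t > 0)) \<longrightarrow>
           (\<forall>X1 X2 :: 'a mchain. d_OTM p X1 X2 dX = 0 \<longrightarrow> (\<forall>n. path_law X1 n = path_law X2 n)))"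
proof
  have nn: "\<And>u v. 0 \<le> dX u v" and zz: "\<And>u. dX u u = 0" and sym: "\<And>u v. dX u v = dX v u"
    using assms by (auto simp: is_pseudometric_def)
  have nonneg: "0 \<le> d_OTM p X Y dX" for X Y :: "'a mchain"
    by (rule d_ge) (rule cost_nonneg[OF nn])
  have refl: "d_OTM p X X dX = 0" for X :: "'a mchain"
  proof -
    obtain \<mu>0 K where h: "markovian_coupling X X \<mu>0 K" "coupling_cost p \<mu>0 K dX = 0"
      using diag_zero[where C=dX, OF zz, of X p] by blast
    have "d_OTM p X X dX \<le> 0" using d_le[where C=dX, OF nn h(1), of p] h(2) by simp
    with nonneg show ?thesis by (simp add: order_antisym)
  qed
  have symle: "d_OTM p X Y dX \<le> d_OTM p Y X dX" for X Y :: "'a mchain"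
  proof (rule d_ge)
    fix \<mu>0 K assume "markovian_coupling Y X \<mu>0 K"
    from swap_cost[where C=dX, OF sym this, of p] obtain \<mu>0' K' where
      h: "markovian_coupling X Y \<mu>0' K'" "coupling_cost p \<mu>0' K' dX = coupling_cost p \<mu>0 K dX" by blast
    show "d_OTM p X Y dX \<le> coupling_cost p \<mu>0 K dX" using d_le[where C=dX, OF nn h(1), of p] h(2) by simp
  qed
  have tri: "d_OTM p X Z dX \<le> d_OTM p X Y dX + d_OTM p Y Z dX" for X Y Z :: "'a mchain"
  proof -
    have "d_OTM p X Z dX - d_OTM p Y Z dX \<le> d_OTM p X Y dX"
    proof (rule d_ge)
      fix \<mu> K assume mc1: "markovian_coupling X Y \<mu> K"
      have "d_OTM p X Z dX - coupling_cost p \<mu> K dX \<le> d_OTM p Y Z dX"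
      proof (rule d_ge)
        fix \<mu>' K' assume mc2: "markovian_coupling Y Z \<mu>' K'"
        from triangle_cost[where d=dX, OF assms mc1 mc2, of p] obtain \<mu>'' K'' where
          h: "markovian_coupling X Z \<mu>'' K''"
          "coupling_cost p \<mu>'' K'' dX \<le> coupling_cost p \<mu> K dX + coupling_cost p \<mu>' K' dX" by blast
        moreover have "d_OTM p X Z dX \<le> coupling_cost p \<mu>'' K'' dX"
          using d_le[where C=dX, OF nn h(1), of p] .
        ultimately show "d_OTM p X Z dX - coupling_cost p \<mu> K dX \<le> coupling_cost p \<mu>' K' dX" by linarith
      qed
      then show "d_OTM p X Z dX - d_OTM p Y Z dX \<le> coupling_cost p \<mu> K dX" by linarith
    qed
    then show ?thesis by linarith
  qed
  show "is_pseudometric (\<lambda>X1 X2 :: 'a mchain. d_OTM p X1 X2 dX)"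
    unfolding is_pseudometric_def
  proof (intro conjI allI)
    fix X Y :: "'a mchain"
    show "d_OTM p X Y dX = d_OTM p Y X dX" using symle[of X Y] symle[of Y X] by linarith
  qed (use refl nonneg tri in blast)+
next
  show "(is_metric dX \<and> (\<forall>t. pmf p t > 0)) \<longrightarrow>
           (\<forall>X1 X2 :: 'a mchain. d_OTM p X1 X2 dX = 0 \<longrightarrow> (\<forall>n. path_law X1 n = path_law X2 n))"
    using metric_part by blast
qed


end
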